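(* Assume the center manifold expansion hypothesis (H$_C$). Then for all $N>0$, $r>0$, $\sigma>0$ and every $i\ge -1$, $$c_i(\sigma N,\sigma^{\nu-1}r)=\frac{1}{\sigma}\,c_i(N,r).$$
   Context: Fix an integer $\nu\ge2$. For $N>0$ and $r>0$ let $w_{N,r}(\lambda)=\exp\!\big[-N\big(\tfrac{\lambda^2}{2}+\tfrac{r\lambda^{2\nu}}{2\nu}\big)\big]$ on $\mathbb R$. Let $\{\pi_n\}$ be the associated monic orthogonal polynomials, with recurrence $\lambda\pi_n=\pi_{n+1}+b_n^2\pi_{n-1}$ and $b_n^2>0$. Write $x_{n,N,r}:=b_n^2$. Hypothesis (H$_C$), the center manifold expansion: for every $N,r>0$ there are real numbers $c_i(N,r)$, $i\ge-1$, such that for every integer $m\ge-1$ there exist $K_{2,m}(N,r)>0$ and $n_1$ with $$\Big|x_{n,N,r}-\sum_{i=-1}^m c_i(N,r)\,n^{-i/\nu}\Big|<\frac{K_{2,m}(N,r)}{n^{(m+1)/\nu}}\quad\text{for all } n\ge n_1.$$ The coefficients $c_i(N,r)$ are then uniquely determined. *)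

theory Defs
  imports "HOL-Analysis.Analysis" "HOL-Computational_Algebra.Polynomial"
begin

definition wgt :: "nat \<Rightarrow> real \<Rightarrow> real \<Rightarrow> real \<Rightarrow> real" where
  "wgt \<nu> N r x = exp (- N * (x^2 / 2 + r * x^(2*\<nu>) / (2 * real \<nu>)))"

definition ip :: "nat \<Rightarrow> real \<Rightarrow> real \<Rightarrow> real poly \<Rightarrow> real poly \<Rightarrow> real" where
  "ip \<nu> N r p q = (LINT x|lborel. poly p x * poly q x * wgt \<nu> N r x)"

definition is_monic_OP :: "nat \<Rightarrow> real \<Rightarrow> real \<Rightarrow> (nat \<Rightarrow> real poly) \<Rightarrow> bool" where
  "is_monic_OP \<nu> N r \<pi> \<longleftrightarrow>
     (\<forall>n. degree (\<pi> n) = n \<and> lead_coeff (\<pi> n) = 1 \<and>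
          (\<forall>m<n. ip \<nu> N r (\<pi> n) (\<pi> m) = 0))"

definition monic_OP :: "nat \<Rightarrow> real \<Rightarrow> real \<Rightarrow> nat \<Rightarrow> real poly" where
  "monic_OP \<nu> N r = (THE \<pi>. is_monic_OP \<nu> N r \<pi>)"

text \<open>x_{n,N,r} = b_n^2, defined by lambda pi_n = pi_{n+1} + b_n^2 pi_{n-1} (n >= 1).\<close>
definition xcoef :: "nat \<Rightarrow> nat \<Rightarrow> real \<Rightarrow> real \<Rightarrow> real" where
  "xcoef \<nu> n N r = (THE b. [:0, 1:] * monic_OP \<nu> N r n
        = monic_OP \<nu> N r (Suc n) + smult b (monic_OP \<nu> N r (n - 1)))"

definition cm_expansion :: "nat \<Rightarrow> real \<Rightarrow> real \<Rightarrow> (int \<Rightarrow> real) \<Rightarrow> bool" where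
  "cm_expansion \<nu> N r c \<longleftrightarrow>
     (\<forall>m::int. m \<ge> -1 \<longrightarrow> (\<exists>K>0. \<exists>n1::nat. \<forall>n\<ge>n1.
        \<bar>xcoef \<nu> n N r - (\<Sum>i\<in>{-1..m}. c i * real n powr (- real_of_int i / real \<nu>))\<bar>
          < K / real n powr (real_of_int (m + 1) / real \<nu>)))"

definition H_C :: "nat \<Rightarrow> bool" where
  "H_C \<nu> \<longleftrightarrow> (\<forall>N>0. \<forall>r>0. \<exists>c. cm_expansion \<nu> N r c)"

definition cm_coeff :: "nat \<Rightarrow> real \<Rightarrow> real \<Rightarrow> int \<Rightarrow> real" where
  "cm_coeff \<nu> N r i = (THE a. \<exists>c. cm_expansion \<nu> N r c \<and> c i = a)"

end

theory Submission imports Defs "HOL-Probability.Probability" begin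

lemma wgt_alt: "wgt \<nu> N r = (\<lambda>x. exp (- N * (x^2 * (1/2) + (r / (2*real \<nu>)) * x^(2*\<nu>))))"
  by (simp add: wgt_def fun_eq_iff)

lemma wgt_pos: "wgt \<nu> N r x > 0" by (simp add: wgt_def)

lemma wgt_le: assumes "N \<ge> 0" "r \<ge> 0" shows "wgt \<nu> N r x \<le> exp (- N * x^2 / 2)"
proof -
  have "x^(2*\<nu>) \<ge> 0" by (simp add: power_mult)
  hence "r * x^(2*\<nu>) / (2 * real \<nu>) \<ge> 0" using assms by simp
  hence "N * (r * x^(2*\<nu>) / (2 * real \<nu>)) \<ge> 0" using assms by simp
  thus ?thesis unfolding wgt_def by (simp add: algebra_simps)
qed

lemma integrable_gauss_mom: fixes N :: real assumes "N > 0"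
  shows "integrable lborel (\<lambda>x. \<bar>x\<bar>^k * exp (- N * x^2 / 2))"
proof -
  define sd where "sd = 1 / sqrt N"
  have sd2: "sd^2 = 1/N" using assms by (simp add: sd_def power_divide)
  have "integrable lborel (\<lambda>x. sqrt (2*pi * sd^2) * (normal_density 0 sd x * \<bar>x - 0\<bar>^k))"
    using assms by (intro integrable_mult_right integrable_normal_moment_abs) (simp add: sd_def)
  moreover have eq: "(\<lambda>x. sqrt (2*pi * sd^2) * (normal_density 0 sd x * \<bar>x - 0\<bar>^k)) = (\<lambda>x. \<bar>x\<bar>^k * exp (- N * x^2 / 2))"
    using assms sd2 by (simp add: normal_density_def fun_eq_iff)
  ultimately show ?thesis by metis
qed

lemma integrable_pw: assumes "N > 0" "r \<ge> 0"
  shows "integrable lborel (\<lambda>x. poly p x * wgt \<nu> N r x)"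
proof (rule Bochner_Integration.integrable_bound)
  show "integrable lborel (\<lambda>x. \<Sum>k\<le>degree p. \<bar>coeff p k\<bar> * (\<bar>x\<bar>^k * exp (- N * x^2 / 2)))"
    by (rule Bochner_Integration.integrable_sum, rule integrable_mult_right, rule integrable_gauss_mom[OF assms(1)])
  show "(\<lambda>x. poly p x * wgt \<nu> N r x) \<in> borel_measurable lborel"
    unfolding wgt_alt measurable_lborel2 by (intro borel_measurable_continuous_onI continuous_intros)
  show "AE x in lborel. norm (poly p x * wgt \<nu> N r x) \<le> norm (\<Sum>k\<le>degree p. \<bar>coeff p k\<bar> * (\<bar>x\<bar>^k * exp (- N * x^2 / 2)))"
  proof (rule AE_I2)
    fix x
    have "\<bar>poly p x\<bar> \<le> (\<Sum>k\<le>degree p. \<bar>coeff p k\<bar> * \<bar>x\<bar>^k)"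
      unfolding poly_altdef by (rule order_trans[OF sum_abs]) (simp add: abs_mult power_abs)
    moreover have "0 \<le> wgt \<nu> N r x" "wgt \<nu> N r x \<le> exp (- N * x^2 / 2)"
      using wgt_pos[of \<nu> N r x] wgt_le[of N r \<nu> x] assms by auto
    ultimately have "\<bar>poly p x\<bar> * wgt \<nu> N r x \<le> (\<Sum>k\<le>degree p. \<bar>coeff p k\<bar> * \<bar>x\<bar>^k) * exp (- N * x^2 / 2)"
      by (intro mult_mono) auto
    thus "norm (poly p x * wgt \<nu> N r x) \<le> norm (\<Sum>k\<le>degree p. \<bar>coeff p k\<bar> * (\<bar>x\<bar>^k * exp (- N * x^2 / 2)))"
      using wgt_pos[of \<nu> N r x]
      by (simp add: abs_mult sum_distrib_right mult.assoc sum_nonneg)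
  qed
qed

locale wt = fixes \<nu> :: nat and N r :: real assumes N: "N > 0" and r: "r \<ge> 0"
begin

abbreviation IP where "IP \<equiv> ip \<nu> N r"

lemma int_ip: "integrable lborel (\<lambda>x. poly p x * poly q x * wgt \<nu> N r x)"
  using integrable_pw[OF N r, of "p*q" \<nu>] by simp

lemma ip_add_left: "IP (p + q) s = IP p s + IP q s"
proof -
  have "IP (p + q) s = (LINT x|lborel. poly p x * poly s x * wgt \<nu> N r x + poly q x * poly s x * wgt \<nu> N r x)"
    unfolding ip_def by (simp add: algebra_simps)
  also have "\<dots> = IP p s + IP q s"
    unfolding ip_def by (rule Bochner_Integration.integral_add[OF int_ip int_ip])
  finally show ?thesis .
qed

lemma ip_smult_left: "IP (smult c p) q = c * IP p q"
  unfolding ip_def by (simp add: mult.assoc)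

lemma ip_minus_left: "IP (- p) q = - IP p q"
  using ip_smult_left[of "-1" p q] by simp

lemma ip_diff_left: "IP (p - q) s = IP p s - IP q s"
  using ip_add_left[of p "-q" s] ip_minus_left[of q s] by simp

lemma ip_zero_left: "IP 0 q = 0"
  unfolding ip_def by simp

lemma ip_sym: "IP p q = IP q p"
  unfolding ip_def by (simp add: mult.commute mult.left_commute)

lemma ip_sum_left: "IP (\<Sum>k\<in>A. f k) q = (\<Sum>k\<in>A. IP (f k) q)"
proof (induction A rule: infinite_finite_induct)
  case (infinite A) thus ?case by (simp add: ip_zero_left)
next
  case empty thus ?case by (simp add: ip_zero_left)
next
  case (insert x F) thus ?case by (simp add: ip_add_left)
qed

lemma ip_X: "IP (pCons 0 p) q = IP p (pCons 0 q)"
  unfolding ip_def by (simp add: algebra_simps)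

lemma ip_pos: assumes "p \<noteq> 0" shows "IP p p > 0"
proof -
  have nn: "AE x in lborel. 0 \<le> poly p x * poly p x * wgt \<nu> N r x"
    using wgt_pos[of \<nu> N r] by (intro AE_I2) (simp add: less_imp_le)
  have ge: "IP p p \<ge> 0" unfolding ip_def
    by (rule integral_nonneg_AE[OF nn])
  have "IP p p \<noteq> 0"
  proof
    assume "IP p p = 0"
    hence "AE x in lborel. poly p x * poly p x * wgt \<nu> N r x = 0"
      using integral_nonneg_eq_0_iff_AE[OF int_ip nn] unfolding ip_def by simp
    moreover have "AE x in lborel. x \<notin> {x. poly p x = 0}"
      by (rule AE_not_in, rule finite_imp_null_set_lborel, rule poly_roots_finite[OF assms])
    ultimately have "AE x in lborel. x \<in> ({}::real set)"
      by eventually_elim (use wgt_pos[of \<nu> N r] in \<open>auto simp: less_le\<close>)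
    then obtain M where "{x \<in> space lborel. x \<notin> ({}::real set)} \<subseteq> M" "emeasure lborel M = 0" "M \<in> sets lborel"
      by (rule AE_E)
    hence "UNIV \<subseteq> M" "emeasure lborel M = 0" "M \<in> sets lborel" by auto
    hence "emeasure lborel (UNIV::real set) = 0"
      by (metis emeasure_mono sets_lborel UNIV_I le_zero_eq sets_UNIV)
    thus False by simp
  qed
  with ge show ?thesis by simp
qed

end

lemma monic_degI: fixes p :: "real poly"
  assumes "\<And>j. j > n \<Longrightarrow> coeff p j = 0" "coeff p n = 1"
  shows "degree p = n \<and> lead_coeff p = 1"
proof -
  have "degree p \<le> n" using assms(1) by (intro degree_le) auto
  moreover have "n \<le> degree p" using assms(2) by (intro le_degree) simp
  ultimately show ?thesis using assms(2) by simp
qed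

lemma monic_diff_deg: fixes p q :: "real poly"
  assumes "degree p = n" "lead_coeff p = 1" "degree q = n" "lead_coeff q = 1" "p \<noteq> q"
  shows "degree (p - q) < n"
proof -
  have "degree (p - q) \<le> n" by (rule degree_diff_le) (use assms in auto)
  moreover have "coeff (p - q) n = 0" using assms by simp
  moreover have "p - q \<noteq> 0" using assms by simp
  ultimately show ?thesis by (metis leading_coeff_0_iff nat_less_le)
qed

context wt begin

lemma OP_props: assumes "is_monic_OP \<nu> N r \<pi>"
  shows "degree (\<pi> n) = n" "lead_coeff (\<pi> n) = 1" "m < n \<Longrightarrow> IP (\<pi> n) (\<pi> m) = 0" "\<pi> n \<noteq> 0"
proof -
  show 1: "degree (\<pi> n) = n" "lead_coeff (\<pi> n) = 1" "m < n \<Longrightarrow> IP (\<pi> n) (\<pi> m) = 0"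
    using assms unfolding is_monic_OP_def by blast+
  show "\<pi> n \<noteq> 0" using 1(2) by auto
qed

lemma OP_span: assumes "is_monic_OP \<nu> N r \<pi>"
  shows "degree q \<le> n \<Longrightarrow> \<exists>a. q = (\<Sum>k\<le>n. smult (a k) (\<pi> k))"
proof (induction n arbitrary: q)
  case 0
  have "\<pi> 0 = 1" using OP_props(1,2)[OF assms, of 0]
    by (metis degree_0_id lead_coeff_pCons(1) one_pCons pCons_0_0 zero_neq_one)
  moreover have "q = [:coeff q 0:]" using 0 by (metis degree_0_id le_zero_eq)
  ultimately show ?case by (intro exI[of _ "\<lambda>_. coeff q 0"]) (simp add: smult_one)
next
  case (Suc n)
  define q' where "q' = q - smult (coeff q (Suc n)) (\<pi> (Suc n))"
  have "degree q' \<le> n"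
  proof (rule degree_le[THEN order_trans[OF _ order_refl]] , intro allI impI)
    fix j assume "n < j"
    show "coeff q' j = 0"
    proof (cases "j = Suc n")
      case True thus ?thesis using OP_props(2)[OF assms, of "Suc n"] OP_props(1)[OF assms, of "Suc n"]
        by (simp add: q'_def)
    next
      case False
      hence "j > Suc n" using \<open>n < j\<close> by simp
      thus ?thesis using Suc.prems OP_props(1)[OF assms, of "Suc n"]
        by (simp add: q'_def coeff_eq_0)
    qed
  qed
  then obtain a where a: "q' = (\<Sum>k\<le>n. smult (a k) (\<pi> k))" using Suc.IH by blast
  define a' where "a' = a(Suc n := coeff q (Suc n))"
  have "(\<Sum>k\<le>n. smult (a k) (\<pi> k)) = (\<Sum>k\<le>n. smult (a' k) (\<pi> k))"
    by (intro sum.cong) (auto simp: a'_def)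
  hence "q = (\<Sum>k\<le>Suc n. smult (a' k) (\<pi> k))" using a by (simp add: q'_def a'_def algebra_simps)
  thus ?case by blast
qed

lemma OP_orth_low: assumes "is_monic_OP \<nu> N r \<pi>" "degree q < n"
  shows "IP (\<pi> n) q = 0"
proof -
  obtain a where a: "q = (\<Sum>k\<le>n-1. smult (a k) (\<pi> k))"
    using OP_span[OF assms(1), of q "n-1"] assms(2) by (metis Suc_pred' less_Suc_eq_le not_less_zero not_gr_zero)
  have "IP (\<pi> n) q = IP q (\<pi> n)" by (rule ip_sym)
  also have "\<dots> = (\<Sum>k\<le>n-1. a k * IP (\<pi> k) (\<pi> n))" unfolding a by (simp add: ip_sum_left ip_smult_left)
  also have "\<dots> = 0"
  proof (intro sum.neutral ballI)
    fix k assume "k \<in> {..n-1}"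
    hence "k < n" using assms(2) by auto
    thus "a k * IP (\<pi> k) (\<pi> n) = 0" using OP_props(3)[OF assms(1)] ip_sym by simp
  qed
  finally show ?thesis .
qed

lemma OP_unique: assumes "is_monic_OP \<nu> N r \<pi>" "is_monic_OP \<nu> N r \<pi>'"
  shows "\<pi> = \<pi>'"
proof
  fix n show "\<pi> n = \<pi>' n"
  proof (rule ccontr)
    assume ne: "\<pi> n \<noteq> \<pi>' n"
    define d where "d = \<pi> n - \<pi>' n"
    have dl: "degree d < n" unfolding d_def using OP_props[OF assms(1)] OP_props[OF assms(2)] ne
      by (intro monic_diff_deg) auto
    have "IP d d = IP (\<pi> n) d - IP (\<pi>' n) d" unfolding d_def by (simp add: ip_diff_left)
    also have "\<dots> = 0" using OP_orth_low[OF assms(1) dl] OP_orth_low[OF assms(2) dl] by simp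
    finally show False using ip_pos[of d] ne by (simp add: d_def)
  qed
qed

function GS :: "nat \<Rightarrow> real poly" where
  "GS n = monom 1 n - (\<Sum>m<n. smult (IP (monom 1 n) (GS m) / IP (GS m) (GS m)) (GS m))"
  by pat_completeness auto
termination by (relation "Wellfounded.measure id") auto

declare GS.simps[simp del]

lemma GS_props: "degree (GS n) = n \<and> lead_coeff (GS n) = 1 \<and> (\<forall>m<n. IP (GS n) (GS m) = 0)"
proof (induction n rule: less_induct)
  case (less n)
  have nz: "GS m \<noteq> 0" if "m < n" for m using less[OF that] by auto
  have c: "coeff (GS n) j = (if j = n then 1 else 0)" if "j \<ge> n" for j
  proof -
    have z: "coeff (GS m) j = 0" if "m \<in> {..<n}" for m using less[of m] \<open>j \<ge> n\<close> that
      by (intro coeff_eq_0) auto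
    have "coeff (GS n) j = coeff (monom 1 n) j - (\<Sum>m<n. IP (monom 1 n) (GS m) / IP (GS m) (GS m) * coeff (GS m) j)"
      unfolding GS.simps[of n] by (simp only: coeff_diff coeff_sum coeff_smult)
    also have "(\<Sum>m<n. IP (monom 1 n) (GS m) / IP (GS m) (GS m) * coeff (GS m) j) = 0"
      by (intro sum.neutral ballI) (simp only: z mult_zero_right)
    finally show ?thesis by (simp add: coeff_monom)
  qed
  have dl: "degree (GS n) = n \<and> lead_coeff (GS n) = 1"
    by (rule monic_degI) (use c in auto)
  have "IP (GS n) (GS m) = 0" if mn: "m < n" for m
  proof -
    define c where "c = (\<lambda>m. IP (monom 1 n) (GS m) / IP (GS m) (GS m))"
    have o: "IP (GS m') (GS m) = 0" if "m' < n" "m' \<noteq> m" for m'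
      using that(2) less[OF that(1)] less[OF mn] ip_sym[of "GS m'" "GS m"]
      by (cases m' m rule: linorder_cases) auto
    have "IP (GS n) (GS m) = IP (monom 1 n) (GS m) - (\<Sum>m'<n. c m' * IP (GS m') (GS m))"
      unfolding GS.simps[of n] ip_diff_left ip_sum_left ip_smult_left c_def by (rule refl)
    also have "(\<Sum>m'<n. c m' * IP (GS m') (GS m)) = (\<Sum>m'<n. if m' = m then c m * IP (GS m) (GS m) else 0)"
      by (intro sum.cong refl) (auto simp: o)
    also have "\<dots> = c m * IP (GS m) (GS m)" using mn by (simp add: sum.delta)
    also have "\<dots> = IP (monom 1 n) (GS m)" using ip_pos[OF nz[OF mn]] by (simp add: c_def)
    finally show ?thesis by simp
  qed
  with dl show ?case by blast
qed

lemma OP_exists: "is_monic_OP \<nu> N r GS"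
  using GS_props unfolding is_monic_OP_def by blast

lemma monic_OP_is: "is_monic_OP \<nu> N r (monic_OP \<nu> N r)"
  unfolding monic_OP_def by (rule theI[of _ GS]) (use OP_exists OP_unique in auto)

lemma monic_OP_eq: "is_monic_OP \<nu> N r \<pi> \<Longrightarrow> monic_OP \<nu> N r = \<pi>"
  using OP_unique monic_OP_is by blast

end

definition Sc :: "real \<Rightarrow> (nat \<Rightarrow> real poly) \<Rightarrow> nat \<Rightarrow> real poly" where
  "Sc s \<pi> n = smult (1 / s^n) (pcompose (\<pi> n) [:0, s:])"

lemma poly_Sc: "poly (Sc s \<pi> n) x = poly (\<pi> n) (s * x) / s^n"
  by (simp add: Sc_def poly_pcompose mult.commute)

lemma wgt_scale: assumes "\<nu> \<ge> 1"
  shows "wgt \<nu> (s^2 * N) ((s^2)^(\<nu>-1) * r) x = wgt \<nu> N r (s * x)"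
proof -
  obtain k where k: "\<nu> = Suc k" using assms by (cases \<nu>) auto
  have "(s^2)^(\<nu>-1) * s^2 = s^(2*\<nu>)" unfolding k by (simp add: power_mult[symmetric] power_add[symmetric])
  hence e: "(s*x)^(2*\<nu>) = s^2 * ((s^2)^(\<nu>-1) * x^(2*\<nu>))" by (simp add: power_mult_distrib algebra_simps)
  show ?thesis unfolding wgt_def e by (simp add: power_mult_distrib algebra_simps)
qed

lemma ip_scale: assumes "\<nu> \<ge> 1" "s \<noteq> 0"
  shows "ip \<nu> (s^2 * N) ((s^2)^(\<nu>-1) * r) (Sc s \<pi> n) (Sc s \<pi> m) = ip \<nu> N r (\<pi> n) (\<pi> m) / (s^n * s^m * \<bar>s\<bar>)"
proof -
  define g where "g = (\<lambda>y. poly (\<pi> n) y * poly (\<pi> m) y * wgt \<nu> N r y)"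
  have "ip \<nu> (s^2 * N) ((s^2)^(\<nu>-1) * r) (Sc s \<pi> n) (Sc s \<pi> m) = (LINT x|lborel. (1 / (s^n * s^m)) * g (0 + s * x))"
    unfolding ip_def poly_Sc wgt_scale[OF assms(1)] g_def by (simp add: algebra_simps)
  also have "\<dots> = (1 / (s^n * s^m)) * (LINT x|lborel. g (0 + s * x))" by simp
  also have "(LINT x|lborel. g (0 + s * x)) = (LINT x|lborel. g x) / \<bar>s\<bar>"
    using lborel_integral_real_affine[OF assms(2), of g 0] assms(2) by simp
  finally show ?thesis unfolding ip_def g_def by simp
qed

lemma OP_scale: assumes "\<nu> \<ge> 1" "s \<noteq> 0" "is_monic_OP \<nu> N r \<pi>"
  shows "is_monic_OP \<nu> (s^2 * N) ((s^2)^(\<nu>-1) * r) (Sc s \<pi>)"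
  unfolding is_monic_OP_def
proof (intro allI conjI impI)
  fix n
  have d: "degree (\<pi> n) = n" "lead_coeff (\<pi> n) = 1" using assms(3) unfolding is_monic_OP_def by blast+
  show "degree (Sc s \<pi> n) = n" using d assms(2) by (simp add: Sc_def degree_pcompose)
  show "lead_coeff (Sc s \<pi> n) = 1"
    using d assms(2) lead_coeff_comp[of "[:0, s:]" "\<pi> n"] by (simp add: Sc_def degree_pcompose)
  fix m assume "m < n"
  hence "ip \<nu> N r (\<pi> n) (\<pi> m) = 0" using assms(3) unfolding is_monic_OP_def by blast
  thus "ip \<nu> (s^2 * N) ((s^2)^(\<nu>-1) * r) (Sc s \<pi> n) (Sc s \<pi> m) = 0"
    by (subst ip_scale[OF assms(1,2)]) simp
qed

lemma wgt_even: "wgt \<nu> N r (- x) = wgt \<nu> N r x"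
  by (simp add: wgt_def power_mult)

context wt begin

abbreviation P where "P \<equiv> monic_OP \<nu> N r"

lemma P_OP: "is_monic_OP \<nu> N r P" by (rule monic_OP_is)

lemma P_parity: assumes "\<nu> \<ge> 1" shows "poly (P n) (- x) = (-1)^n * poly (P n) x"
proof -
  have "is_monic_OP \<nu> ((-1)^2 * N) (((-1)^2)^(\<nu>-1) * r) (Sc (-1) P)"
    by (rule OP_scale[OF assms _ P_OP]) simp
  hence "is_monic_OP \<nu> N r (Sc (-1) P)" by simp
  hence "Sc (-1) P = P" using OP_unique[OF _ P_OP] by blast
  hence "poly (Sc (-1) P n) x = poly (P n) x" by simp
  thus ?thesis unfolding poly_Sc by (simp add: divide_simps split: if_splits)
qed

lemma P_odd_int: assumes "\<nu> \<ge> 1" shows "IP (pCons 0 (P n)) (P n) = 0"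
proof -
  define g where "g = (\<lambda>x. x * poly (P n) x * poly (P n) x * wgt \<nu> N r x)"
  have gm: "g (0 + -1 * x) = - g x" for x
    unfolding g_def using P_parity[OF assms, of n x] wgt_even[of \<nu> N r x]
    by (simp add: algebra_simps)
  have e: "IP (pCons 0 (P n)) (P n) = (LINT x|lborel. g x)"
    unfolding ip_def g_def by simp
  have "(LINT x|lborel. g x) = - (LINT x|lborel. g x)"
  proof -
    have "(LINT x|lborel. g x) = (LINT x|lborel. g (0 + -1 * x))"
      using lborel_integral_real_affine[of "-1" g 0] by simp
    also have "\<dots> = (LINT x|lborel. - g x)" by (simp only: gm)
    finally show ?thesis by simp
  qed
  thus ?thesis using e by simp
qed

lemma OP_zero: assumes "is_monic_OP \<nu> N r \<pi>" "degree d \<le> n" "\<And>k. k \<le> n \<Longrightarrow> IP d (\<pi> k) = 0"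
  shows "d = 0"
proof (rule ccontr)
  assume "d \<noteq> 0"
  obtain a where a: "d = (\<Sum>k\<le>n. smult (a k) (\<pi> k))" using OP_span[OF assms(1,2)] by blast
  have "IP d d = IP (\<Sum>k\<le>n. smult (a k) (\<pi> k)) d" using a by simp
  also have "\<dots> = (\<Sum>k\<le>n. a k * IP (\<pi> k) d)" by (simp add: ip_sum_left ip_smult_left)
  also have "\<dots> = (\<Sum>k\<le>n. a k * IP d (\<pi> k))" by (intro sum.cong refl) (simp only: ip_sym[of _ d])
  also have "\<dots> = 0" using assms(3) by simp
  finally show False using ip_pos[OF \<open>d \<noteq> 0\<close>] by simp
qed

lemma rec_q: assumes "\<nu> \<ge> 1" "k \<le> n" "Suc k \<noteq> n"
  shows "IP (pCons 0 (P n) - P (Suc n)) (P k) = 0"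
proof -
  have a: "IP (P (Suc n)) (P k) = 0" using OP_props(3)[OF P_OP] assms by simp
  have b: "IP (pCons 0 (P n)) (P k) = 0"
  proof (cases "k = n")
    case True thus ?thesis using P_odd_int[OF assms(1)] by simp
  next
    case False
    hence "Suc k < n" using assms by simp
    moreover have "degree (pCons 0 (P k)) = Suc k" using OP_props(1,4)[OF P_OP, of k] by simp
    ultimately have "IP (P n) (pCons 0 (P k)) = 0" by (intro OP_orth_low[OF P_OP]) simp
    thus ?thesis by (simp add: ip_X)
  qed
  show ?thesis using a b by (simp add: ip_diff_left)
qed

lemma deg_q: "degree (pCons 0 (P n) - P (Suc n)) \<le> n"
proof (rule degree_le, intro allI impI)
  fix j assume "n < j"
  then obtain i where i: "j = Suc i" "n \<le> i" by (cases j) auto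
  have "coeff (P n) i = (if i = n then 1 else 0)" using OP_props(1,2)[OF P_OP, of n] i
    by (auto intro: coeff_eq_0)
  moreover have "coeff (P (Suc n)) (Suc i) = (if i = n then 1 else 0)" using OP_props(1,2)[OF P_OP, of "Suc n"] i
    by (auto intro: coeff_eq_0)
  ultimately show "coeff (pCons 0 (P n) - P (Suc n)) j = 0" using i by simp
qed

lemma P_rec: assumes "\<nu> \<ge> 1"
  shows "\<exists>b. pCons 0 (P n) = P (Suc n) + smult b (P (n-1)) \<and> (n = 0 \<longrightarrow> b = 0)"
proof (cases n)
  case 0
  have "pCons 0 (P n) - P (Suc n) = 0"
    by (rule OP_zero[OF P_OP deg_q]) (use rec_q[OF assms] 0 in auto)
  thus ?thesis using 0 by (intro exI[of _ 0]) (simp add: algebra_simps)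
next
  case (Suc n')
  define q where "q = pCons 0 (P n) - P (Suc n)"
  define b where "b = IP q (P n') / IP (P n') (P n')"
  have "q - smult b (P n') = 0"
  proof (rule OP_zero[OF P_OP])
    have "degree q \<le> n" unfolding q_def by (rule deg_q)
    moreover have "degree (smult b (P n')) \<le> n" using OP_props(1)[OF P_OP, of n'] Suc
      by (metis degree_smult_le order_trans le_SucI order_refl)
    ultimately show "degree (q - smult b (P n')) \<le> n" by (rule degree_diff_le)
    fix k assume k: "k \<le> n"
    show "IP (q - smult b (P n')) (P k) = 0"
    proof (cases "k = n'")
      case True
      have "IP (P n') (P n') > 0" using ip_pos OP_props(4)[OF P_OP] by blast
      thus ?thesis using True by (simp add: ip_diff_left ip_smult_left b_def)
    next
      case False
      have "IP (P n') (P k) = 0"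
      proof (cases "k < n'")
        case True thus ?thesis using OP_props(3)[OF P_OP] by simp
      next
        case False
        hence "k = n" using k \<open>k \<noteq> n'\<close> Suc by simp
        thus ?thesis using OP_props(3)[OF P_OP, of n' n] Suc ip_sym by simp
      qed
      moreover have "IP q (P k) = 0" unfolding q_def using rec_q[OF assms k] False Suc by simp
      ultimately show ?thesis by (simp add: ip_diff_left ip_smult_left)
    qed
  qed
  thus ?thesis using Suc unfolding q_def by (intro exI[of _ b]) (simp add: algebra_simps)
qed

lemma xcoef_eq: assumes "pCons 0 (P n) = P (Suc n) + smult b (P (n-1))"
  shows "xcoef \<nu> n N r = b"
  unfolding xcoef_def
proof (rule the_equality)
  show "[:0, 1:] * P n = P (Suc n) + smult b (P (n - 1))" using assms by simp
  fix b' assume "[:0, 1:] * P n = P (Suc n) + smult b' (P (n - 1))"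
  hence "smult b' (P (n-1)) = smult b (P (n-1))" using assms by simp
  hence "smult (b' - b) (P (n-1)) = 0" by (simp add: smult_diff_left)
  thus "b' = b" using OP_props(4)[OF P_OP, of "n-1"] by simp
qed

end

lemma xcoef_scale: assumes "\<nu> \<ge> 1" "N > 0" "r \<ge> 0" "\<sigma> > 0"
  shows "xcoef \<nu> n (\<sigma> * N) (\<sigma>^(\<nu>-1) * r) = xcoef \<nu> n N r / \<sigma>"
proof -
  interpret W: wt \<nu> N r using assms by unfold_locales auto
  interpret W': wt \<nu> "\<sigma> * N" "\<sigma>^(\<nu>-1) * r" using assms by unfold_locales auto
  define s where "s = sqrt \<sigma>"
  have s2: "s^2 = \<sigma>" and s0: "s \<noteq> 0" "s > 0" using assms by (auto simp: s_def)
  obtain b where b: "pCons 0 (W.P n) = W.P (Suc n) + smult b (W.P (n-1))" "n = 0 \<longrightarrow> b = 0"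
    using W.P_rec[OF assms(1)] by blast
  have xb: "xcoef \<nu> n N r = b" by (rule W.xcoef_eq[OF b(1)])
  have "is_monic_OP \<nu> (s^2 * N) ((s^2)^(\<nu>-1) * r) (Sc s W.P)"
    by (rule OP_scale[OF assms(1) s0(1) W.P_OP])
  hence PE: "W'.P = Sc s W.P" unfolding s2 by (rule W'.monic_OP_eq)
  have pb: "(s*x) * poly (W.P n) (s*x) = poly (W.P (Suc n)) (s*x) + b * poly (W.P (n-1)) (s*x)" for x
    using arg_cong[OF b(1), of "\<lambda>p. poly p (s*x)"] by simp
  have "pCons 0 (W'.P n) = W'.P (Suc n) + smult (b / \<sigma>) (W'.P (n-1))"
    unfolding PE poly_eq_poly_eq_iff[symmetric]
  proof (rule ext)
    fix x
    show "poly (pCons 0 (Sc s W.P n)) x = poly (Sc s W.P (Suc n) + smult (b / \<sigma>) (Sc s W.P (n - 1))) x"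
    proof (cases n)
      case 0
      thus ?thesis using pb[of x] b(2) s0 by (simp add: poly_Sc field_simps)
    next
      case (Suc k)
      define A where "A = poly (W.P (Suc k)) (s*x)"
      define B where "B = poly (W.P k) (s*x)"
      define C where "C = poly (W.P (Suc (Suc k))) (s*x)"
      have e: "s * x * A = C + b * B" using pb[of x] Suc by (simp add: A_def B_def C_def)
      have "x * A / s^Suc k = (s * x * A) / s^Suc (Suc k)" using s0 by (simp add: field_simps)
      also have "\<dots> = (C + b * B) / s^Suc (Suc k)" by (simp only: e)
      also have "\<dots> = C / s^Suc (Suc k) + b / \<sigma> * (B / s^k)" using s0 s2[symmetric] by (simp add: field_simps power2_eq_square)
      finally show ?thesis using Suc by (simp add: poly_Sc A_def B_def C_def)
    qed
  qed
  hence "xcoef \<nu> n (\<sigma> * N) (\<sigma>^(\<nu>-1) * r) = b / \<sigma>" by (rule W'.xcoef_eq)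
  thus ?thesis using xb by simp
qed

lemma cm_scale: assumes "\<sigma> > 0" "\<And>n. xcoef \<nu> n N' r' = xcoef \<nu> n N r / \<sigma>" "cm_expansion \<nu> N r c"
  shows "cm_expansion \<nu> N' r' (\<lambda>i. c i / \<sigma>)"
  unfolding cm_expansion_def
proof (intro allI impI)
  fix m :: int assume "m \<ge> -1"
  then obtain K n1 where K: "K > 0" "\<forall>n\<ge>n1. \<bar>xcoef \<nu> n N r - (\<Sum>i\<in>{-1..m}. c i * real n powr (- real_of_int i / real \<nu>))\<bar>
          < K / real n powr (real_of_int (m + 1) / real \<nu>)"
    using assms(3) unfolding cm_expansion_def by blast
  show "\<exists>K>0. \<exists>n1. \<forall>n\<ge>n1. \<bar>xcoef \<nu> n N' r' - (\<Sum>i\<in>{-1..m}. c i / \<sigma> * real n powr (- real_of_int i / real \<nu>))\<bar>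
          < K / real n powr (real_of_int (m + 1) / real \<nu>)"
  proof (intro exI[of _ "K / \<sigma>"] exI[of _ n1] conjI allI impI)
    show "K / \<sigma> > 0" using K assms by simp
    fix n assume "n \<ge> n1"
    have eqn: "xcoef \<nu> n N' r' - (\<Sum>i\<in>{-1..m}. c i / \<sigma> * real n powr (- real_of_int i / real \<nu>))
        = (xcoef \<nu> n N r - (\<Sum>i\<in>{-1..m}. c i * real n powr (- real_of_int i / real \<nu>))) / \<sigma>"
      using assms(1) by (simp add: assms(2) diff_divide_distrib sum_divide_distrib)
    thus "\<bar>xcoef \<nu> n N' r' - (\<Sum>i\<in>{-1..m}. c i / \<sigma> * real n powr (- real_of_int i / real \<nu>))\<bar>
          < K / \<sigma> / real n powr (real_of_int (m + 1) / real \<nu>)"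
    proof -
      have "\<bar>xcoef \<nu> n N r - (\<Sum>i\<in>{-1..m}. c i * real n powr (- real_of_int i / real \<nu>))\<bar> / \<sigma>
          < K / real n powr (real_of_int (m + 1) / real \<nu>) / \<sigma>"
        using K(2) \<open>n \<ge> n1\<close> assms(1) by (intro divide_strict_right_mono) auto
      thus ?thesis unfolding eqn using assms(1) by (simp add: abs_divide mult.commute)
    qed
  qed
qed

lemma cm_unique: assumes "\<nu> \<ge> 1" "cm_expansion \<nu> N r c" "cm_expansion \<nu> N r c'"
  shows "c (int k - 1) = c' (int k - 1)"
proof (induction k rule: less_induct)
  case (less k)
  define j where "j = int k - 1"
  define e where "e = (\<lambda>i. c i - c' i)"
  have ez: "e i = 0" if "-1 \<le> i" "i < j" for i
  proof -
    have "nat (i + 1) < k" using that j_def by simp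
    from less[OF this] show ?thesis using that by (simp add: e_def)
  qed
  have j1: "j \<ge> -1" by (simp add: j_def)
  obtain K1 n1 where K1: "\<forall>n\<ge>n1. \<bar>xcoef \<nu> n N r - (\<Sum>i\<in>{-1..j}. c i * real n powr (- real_of_int i / real \<nu>))\<bar>
          < K1 / real n powr (real_of_int (j + 1) / real \<nu>)"
    using assms(2) j1 unfolding cm_expansion_def by blast
  obtain K2 n2 where K2: "\<forall>n\<ge>n2. \<bar>xcoef \<nu> n N r - (\<Sum>i\<in>{-1..j}. c' i * real n powr (- real_of_int i / real \<nu>))\<bar>
          < K2 / real n powr (real_of_int (j + 1) / real \<nu>)"
    using assms(3) j1 unfolding cm_expansion_def by blast
  define K where "K = K1 + K2"
  have bnd: "\<bar>e j\<bar> < K * real n powr (-1 / real \<nu>)" if n: "n \<ge> max n1 (max n2 1)" for n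
  proof -
    have npos: "real n > 0" using n by simp
    have "(\<Sum>i\<in>{-1..j}. c i * real n powr (- real_of_int i / real \<nu>)) - (\<Sum>i\<in>{-1..j}. c' i * real n powr (- real_of_int i / real \<nu>))
        = (\<Sum>i\<in>{-1..j}. e i * real n powr (- real_of_int i / real \<nu>))"
      by (simp add: e_def sum_subtractf[symmetric] algebra_simps)
    also have "\<dots> = e j * real n powr (- real_of_int j / real \<nu>) + (\<Sum>i\<in>{-1..j} - {j}. e i * real n powr (- real_of_int i / real \<nu>))"
      using j1 by (subst sum.remove[of _ j]) auto
    also have "(\<Sum>i\<in>{-1..j} - {j}. e i * real n powr (- real_of_int i / real \<nu>)) = 0"
      by (intro sum.neutral ballI) (auto simp: ez)
    finally have eq: "(\<Sum>i\<in>{-1..j}. c i * real n powr (- real_of_int i / real \<nu>)) - (\<Sum>i\<in>{-1..j}. c' i * real n powr (- real_of_int i / real \<nu>))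
        = e j * real n powr (- real_of_int j / real \<nu>)" by simp
    have "\<bar>e j * real n powr (- real_of_int j / real \<nu>)\<bar> < K / real n powr (real_of_int (j + 1) / real \<nu>)"
      using K1[rule_format, of n] K2[rule_format, of n] n unfolding eq[symmetric] K_def
      by (simp add: add_divide_distrib abs_diff_less_iff)
    also have "K / real n powr (real_of_int (j + 1) / real \<nu>) = (K * real n powr (-1 / real \<nu>)) * real n powr (- real_of_int j / real \<nu>)"
    proof -
      have nu0: "real \<nu> \<noteq> 0" using assms(1) by simp
      have "real n powr (-1 / real \<nu>) * real n powr (- real_of_int j / real \<nu>) = real n powr (- (real_of_int (j + 1) / real \<nu>))"
        by (subst powr_add[symmetric], rule arg_cong[where f="\<lambda>t. real n powr t"]) (simp add: add_divide_distrib)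
      moreover have "K / real n powr (real_of_int (j + 1) / real \<nu>) = K * real n powr (- (real_of_int (j + 1) / real \<nu>))"
        by (simp add: powr_minus divide_inverse)
      ultimately show ?thesis by (simp add: mult.assoc)
    qed
    finally show ?thesis using npos by (simp add: abs_mult)
  qed
  show ?case
  proof (rule ccontr)
    assume "c (int k - 1) \<noteq> c' (int k - 1)"
    hence ep: "\<bar>e j\<bar> > 0" by (simp add: e_def j_def)
    have "((\<lambda>n. real n powr (-1 / real \<nu>)) \<longlongrightarrow> 0) sequentially"
      using assms(1) by (intro tendsto_neg_powr filterlim_real_sequentially) simp
    hence "((\<lambda>n. K * real n powr (-1 / real \<nu>)) \<longlongrightarrow> 0) sequentially"
      by (rule tendsto_mult_right_zero)
    hence ev: "eventually (\<lambda>n. K * real n powr (-1 / real \<nu>) < \<bar>e j\<bar>) sequentially"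
      using ep by (rule order_tendstoD)
    have "eventually (\<lambda>n. n \<ge> max n1 (max n2 1)) sequentially" by (rule eventually_ge_at_top)
    with ev have "eventually (\<lambda>n. False) sequentially"
      by eventually_elim (use bnd in fastforce)
    thus False by simp
  qed
qed

lemma cm_unique': assumes "\<nu> \<ge> 1" "cm_expansion \<nu> N r c" "cm_expansion \<nu> N r c'" "i \<ge> -1"
  shows "c i = c' i"
  using cm_unique[OF assms(1-3), of "nat (i + 1)"] assms(4) by simp

lemma cm_coeff_eq: assumes "\<nu> \<ge> 1" "cm_expansion \<nu> N r c" "i \<ge> -1"
  shows "cm_coeff \<nu> N r i = c i"
  unfolding cm_coeff_def
proof (rule the_equality)
  show "\<exists>c'. cm_expansion \<nu> N r c' \<and> c' i = c i" using assms by blast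
  fix a assume "\<exists>c'. cm_expansion \<nu> N r c' \<and> c' i = a"
  thus "a = c i" using cm_unique'[OF assms(1,2) _ assms(3)] by metis
qed

theorem lemmaB1:
  fixes \<nu> :: nat and N r \<sigma> :: real and i :: int
  assumes "\<nu> \<ge> 2"
    and "H_C \<nu>"
    and "N > 0" and "r > 0" and "\<sigma> > 0" and "i \<ge> -1"
  shows "cm_coeff \<nu> (\<sigma> * N) (\<sigma> ^ (\<nu> - 1) * r) i = cm_coeff \<nu> N r i / \<sigma>"
proof -
  have nu: "\<nu> \<ge> 1" using assms(1) by simp
  obtain c where c: "cm_expansion \<nu> N r c" using assms(2-4) unfolding H_C_def by blast
  have "cm_expansion \<nu> (\<sigma> * N) (\<sigma> ^ (\<nu> - 1) * r) (\<lambda>i. c i / \<sigma>)"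
    by (rule cm_scale[OF assms(5) xcoef_scale[OF nu assms(3) _ assms(5)] c]) (use assms(4) in simp)
  hence "cm_coeff \<nu> (\<sigma> * N) (\<sigma> ^ (\<nu> - 1) * r) i = c i / \<sigma>" by (rule cm_coeff_eq[OF nu _ assms(6)])
  moreover have "cm_coeff \<nu> N r i = c i" by (rule cm_coeff_eq[OF nu c assms(6)])
  ultimately show ?thesis by simp
qed

end
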